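(* Let $n\ge 2$, let $A\in\mathrm{Mat}_{n\times n}(\mathbb{R})$, and let $X_A$ be the replicator vector field with payoff matrix $A$. Suppose $q=(q_1,\dots,q_n)\in\mathbb{R}^n$ is a formal equilibrium of $X_A$. Let $B=-EAE^t$, let $\eta_q:\mathbb{R}^{n-1}\to\mathbb{R}^{n-1}$ be given by $\eta_q(u)_i=q_i-\frac{e^{u_i}}{1+\sum_{j=1}^{n-1}e^{u_j}}$, and let $\tilde X_B(u)=B\,\eta_q(u)$ on $\mathbb{R}^{n-1}$. Suppose there exists a matrix $D=(d_{ij})\in\mathrm{Mat}_{(n-1)\times(n-1)}(\mathbb{R})$ such that (1) $DB$ is anti-symmetric, and (2) the 1-form $\big(1+\sum_{i=1}^{n-1}e^{u_i}\big)D^t\eta_q(u)$ on $\mathbb{R}^{n-1}$ is closed, i.e. the matrix $D^tQ_1$ is diagonal, where $Q_1$ is the $(n-1)\times(n-1)$ matrix with entries $(Q_1)_{ij}=q_i-\delta_{ij}$. Then the function $$H_D(u)=\sum_{i=1}^{n-1}\Big(\sum_{k=1}^{n-1}d_{ki}q_k\Big)u_i+\sum_{i=1}^{n-1}\Big(\Big(\sum_{k=1}^{n-1}d_{ki}q_k\Big)-d_{ii}\Big)e^{u_i}$$ is a constant of motion of $\tilde X_B$ on $\mathbb{R}^{n-1}$, and consequently the function $$H_D\circ\phi^{-1}(x)=\sum_{i=1}^{n-1}\Big(\sum_{k=1}^{n-1}d_{ki}q_k\Big)\log\Big(\frac{x_i}{x_n}\Big)+\sum_{i=1}^{n-1}\Big(\Big(\sum_{k=1}^{n-1}d_{ki}q_k\Big)-d_{ii}\Big)\frac{x_i}{x_n}$$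 is a constant of motion of $X_A$ on the interior of the simplex $\Delta^{n-1}$.
   Context: $\Delta^{n-1}=\{x\in\mathbb{R}^n: x_i\ge 0,\ \sum_i x_i=1\}$. The replicator vector field with payoff matrix $A$ is $X_A(x)_i=x_i\big((Ax)_i-x^tAx\big)$, $1\le i\le n$, on $\Delta^{n-1}$. A formal equilibrium of $X_A$ is a point $q\in\mathbb{R}^n$ with $\sum_{i=1}^n q_i=1$ and $(Aq)_i=(Aq)_j$ for all $i,j$. $E$ is the $(n-1)\times n$ matrix $E=[-I_{n-1}\mid \mathbb{1}]$ (row $i$ has $-1$ in column $i$, $1$ in column $n$, zeros elsewhere). $\phi:\mathbb{R}^{n-1}\to(\Delta^{n-1})^\circ$ is the diffeomorphism $\phi(u)=\big(\frac{e^{u_1}}{1+\sum_j e^{u_j}},\dots,\frac{e^{u_{n-1}}}{1+\sum_j e^{u_j}},\frac{1}{1+\sum_j e^{u_j}}\big)$, with inverse $\phi^{-1}(x)=(\log(x_1/x_n),\dots,\log(x_{n-1}/x_n))$; $\tilde X_B$ is the pullback of $X_A|_{(\Delta^{n-1})^\circ}$ by $\phi$. A constant of motion of a vector field is a function constant along its integral curves. *)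

theory Defs
  imports "HOL-Analysis.Analysis"
begin

text \<open>Vectors in R^m are represented as functions nat \<Rightarrow> real, using
  the indices 1..m; matrices as nat \<Rightarrow> nat \<Rightarrow> real, using indices 1..m x 1..k.\<close>

definition mat_vec :: "nat \<Rightarrow> (nat \<Rightarrow> nat \<Rightarrow> real) \<Rightarrow> (nat \<Rightarrow> real) \<Rightarrow> nat \<Rightarrow> real" where
  "mat_vec k M v = (\<lambda>i. \<Sum>j=1..k. M i j * v j)"

definition mat_mult :: "nat \<Rightarrow> (nat \<Rightarrow> nat \<Rightarrow> real) \<Rightarrow> (nat \<Rightarrow> nat \<Rightarrow> real) \<Rightarrow> nat \<Rightarrow> nat \<Rightarrow> real" where
  "mat_mult k M N = (\<lambda>i j. \<Sum>l=1..k. M i l * N l j)"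

definition mat_transpose :: "(nat \<Rightarrow> nat \<Rightarrow> real) \<Rightarrow> nat \<Rightarrow> nat \<Rightarrow> real" where
  "mat_transpose M = (\<lambda>i j. M j i)"

definition replicator :: "nat \<Rightarrow> (nat \<Rightarrow> nat \<Rightarrow> real) \<Rightarrow> (nat \<Rightarrow> real) \<Rightarrow> nat \<Rightarrow> real" where
  "replicator n A x = (\<lambda>i. x i * (mat_vec n A x i - (\<Sum>j=1..n. x j * mat_vec n A x j)))"

definition simplex_interior :: "nat \<Rightarrow> (nat \<Rightarrow> real) set" where
  "simplex_interior n = {x. (\<forall>i\<in>{1..n}. 0 < x i) \<and> (\<Sum>i=1..n. x i) = 1}"

definition formal_equilibrium :: "nat \<Rightarrow> (nat \<Rightarrow> nat \<Rightarrow> real) \<Rightarrow> (nat \<Rightarrow> real) \<Rightarrow> bool" where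
  "formal_equilibrium n A q \<longleftrightarrow> (\<Sum>i=1..n. q i) = 1 \<and>
     (\<forall>i\<in>{1..n}. \<forall>j\<in>{1..n}. mat_vec n A q i = mat_vec n A q j)"

text \<open>The (n-1) x n matrix E = [-I | 1].\<close>
definition Emat :: "nat \<Rightarrow> nat \<Rightarrow> nat \<Rightarrow> real" where
  "Emat n = (\<lambda>i j. (if j = n then 1 else 0) - (if i = j then 1 else 0))"

definition Bmat :: "nat \<Rightarrow> (nat \<Rightarrow> nat \<Rightarrow> real) \<Rightarrow> nat \<Rightarrow> nat \<Rightarrow> real" where
  "Bmat n A = (\<lambda>i j. - mat_mult n (mat_mult n (Emat n) A) (mat_transpose (Emat n)) i j)"

definition eta :: "nat \<Rightarrow> (nat \<Rightarrow> real) \<Rightarrow> (nat \<Rightarrow> real) \<Rightarrow> nat \<Rightarrow> real" where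
  "eta n q u = (\<lambda>i. q i - exp (u i) / (1 + (\<Sum>j=1..n-1. exp (u j))))"

definition Xtilde :: "nat \<Rightarrow> (nat \<Rightarrow> nat \<Rightarrow> real) \<Rightarrow> (nat \<Rightarrow> real) \<Rightarrow> (nat \<Rightarrow> real) \<Rightarrow> nat \<Rightarrow> real" where
  "Xtilde n A q u = mat_vec (n-1) (Bmat n A) (eta n q u)"

text \<open>gamma is an integral curve, defined on the interval T, of the vector field X on
  the set S of R^m (derivatives taken componentwise, one-sided at endpoints of T).\<close>
definition integral_curve ::
  "nat \<Rightarrow> ((nat \<Rightarrow> real) \<Rightarrow> nat \<Rightarrow> real) \<Rightarrow> (nat \<Rightarrow> real) set \<Rightarrow> (real \<Rightarrow> nat \<Rightarrow> real) \<Rightarrow> real set \<Rightarrow> bool" where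
  "integral_curve m X S \<gamma> T \<longleftrightarrow> is_interval T \<and>
     (\<forall>t\<in>T. \<gamma> t \<in> S \<and>
        (\<forall>i\<in>{1..m}. ((\<lambda>s. \<gamma> s i) has_real_derivative X (\<gamma> t) i) (at t within T)))"

definition constant_of_motion ::
  "nat \<Rightarrow> ((nat \<Rightarrow> real) \<Rightarrow> nat \<Rightarrow> real) \<Rightarrow> (nat \<Rightarrow> real) set \<Rightarrow> ((nat \<Rightarrow> real) \<Rightarrow> real) \<Rightarrow> bool" where
  "constant_of_motion m X S H \<longleftrightarrow>
     (\<forall>\<gamma> T. integral_curve m X S \<gamma> T \<longrightarrow> (\<forall>s\<in>T. \<forall>t\<in>T. H (\<gamma> s) = H (\<gamma> t)))"

end

theory Submission
  imports Defs
begin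


lemma core:
  fixes D B :: "nat \<Rightarrow> nat \<Rightarrow> real" and w :: "nat \<Rightarrow> real"
  assumes as: "\<forall>i\<in>{1..m}. \<forall>j\<in>{1..m}. mat_mult m D B i j = - mat_mult m D B j i"
  shows "(\<Sum>i=1..m. (\<Sum>k=1..m. D k i * w k) * (\<Sum>j=1..m. B i j * w j)) = 0"
proof -
  define Q where "Q = (\<Sum>k=1..m. \<Sum>j=1..m. w k * w j * mat_mult m D B k j)"
  have "(\<Sum>i=1..m. (\<Sum>k=1..m. D k i * w k) * (\<Sum>j=1..m. B i j * w j))
      = (\<Sum>i=1..m. \<Sum>k=1..m. \<Sum>j=1..m. w k * w j * (D k i * B i j))"
    unfolding sum_product by (intro sum.cong[OF refl]) (simp add: mult_ac)
  also have "\<dots> = (\<Sum>k=1..m. \<Sum>i=1..m. \<Sum>j=1..m. w k * w j * (D k i * B i j))"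
    by (rule sum.swap)
  also have "\<dots> = (\<Sum>k=1..m. \<Sum>j=1..m. \<Sum>i=1..m. w k * w j * (D k i * B i j))"
    by (rule sum.cong[OF refl], rule sum.swap)
  also have "\<dots> = Q"
    unfolding Q_def mat_mult_def sum_distrib_left by (rule refl)
  finally have 1: "(\<Sum>i=1..m. (\<Sum>k=1..m. D k i * w k) * (\<Sum>j=1..m. B i j * w j)) = Q" .
  have "Q = (\<Sum>k=1..m. \<Sum>j=1..m. - (w k * w j * mat_mult m D B j k))"
    unfolding Q_def
  proof (intro sum.cong[OF refl])
    fix k j assume "k \<in> {1..m}" "j \<in> {1..m}"
    then have "mat_mult m D B k j = - mat_mult m D B j k" using as by blast
    then show "w k * w j * mat_mult m D B k j = - (w k * w j * mat_mult m D B j k)" by simp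
  qed
  also have "\<dots> = - (\<Sum>k=1..m. \<Sum>j=1..m. w j * w k * mat_mult m D B j k)"
    by (simp add: sum_negf mult_ac)
  also have "\<dots> = - (\<Sum>j=1..m. \<Sum>k=1..m. w j * w k * mat_mult m D B j k)"
    by (subst sum.swap) (rule refl)
  also have "\<dots> = - Q" unfolding Q_def by simp
  finally have "Q = 0" by simp
  with 1 show ?thesis by simp
qed

lemma grad:
  fixes D :: "nat \<Rightarrow> nat \<Rightarrow> real" and q y :: "nat \<Rightarrow> real"
  assumes diag: "\<forall>i\<in>{1..m}. \<forall>j\<in>{1..m}. i \<noteq> j \<longrightarrow>
        mat_mult m (mat_transpose D) (\<lambda>k l. q k - (if k = l then 1 else 0)) i j = 0"
    and i: "i \<in> {1..m}"
  shows "(\<Sum>k=1..m. D k i * (q k - y k)) = (\<Sum>k=1..m. D k i * q k) - D i i * y i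
           - (\<Sum>k=1..m. D k i * q k) * (\<Sum>k\<in>{1..m}-{i}. y k)"
proof -
  let ?c = "\<Sum>k=1..m. D k i * q k"
  have Dj: "D j i = ?c" if "j \<in> {1..m}-{i}" for j
  proof -
    have "0 = (\<Sum>k=1..m. D k i * (q k - (if k = j then 1 else 0)))"
      using diag i that by (auto simp: mat_mult_def mat_transpose_def)
    also have "\<dots> = (\<Sum>k=1..m. D k i * q k - (if k = j then D k i else 0))"
      by (rule sum.cong[OF refl]) (auto simp: algebra_simps)
    also have "\<dots> = ?c - D j i"
      using that by (simp add: sum_subtractf)
    finally show ?thesis by simp
  qed
  have "(\<Sum>k=1..m. D k i * y k) = D i i * y i + (\<Sum>k\<in>{1..m}-{i}. D k i * y k)"
    using i by (simp add: sum.remove)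
  also have "(\<Sum>k\<in>{1..m}-{i}. D k i * y k) = ?c * (\<Sum>k\<in>{1..m}-{i}. y k)"
    using Dj by (simp add: sum_distrib_left)
  finally show ?thesis by (simp add: right_diff_distrib sum_subtractf)
qed


lemma Bmat_eq:
  assumes "n = Suc m" "i \<in> {1..m}" "j \<in> {1..m}"
  shows "Bmat n A i j = - (A i j - A i n - A n j + A n n)"
proof -
  have EA: "mat_mult n (Emat n) A i l = A n l - A i l" for l
  proof -
    have "mat_mult n (Emat n) A i l = (\<Sum>p=1..n. (if p = n then A p l else 0) - (if p = i then A p l else 0))"
      unfolding mat_mult_def Emat_def by (rule sum.cong[OF refl]) (auto simp: algebra_simps)
    also have "\<dots> = A n l - A i l" using assms by (simp add: sum_subtractf)
    finally show ?thesis .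
  qed
  have "Bmat n A i j = - (\<Sum>l=1..n. (if l = n then A n l - A i l else 0) - (if l = j then A n l - A i l else 0))"
  proof -
    have "Bmat n A i j = - (\<Sum>l=1..n. mat_mult n (Emat n) A i l * Emat n j l)"
      by (simp add: Bmat_def mat_mult_def[of n "mat_mult n (Emat n) A"] mat_transpose_def)
    also have "\<dots> = - (\<Sum>l=1..n. (if l = n then A n l - A i l else 0) - (if l = j then A n l - A i l else 0))"
      unfolding EA unfolding Emat_def by (simp, rule sum.cong[OF refl]) (auto simp: algebra_simps)
    finally show ?thesis .
  qed
  also have "\<dots> = - ((A n n - A i n) - (A n j - A i j))"
    using assms by (simp add: sum_subtractf)
  finally show ?thesis by simp
qed

lemma Bw:
  fixes A :: "nat \<Rightarrow> nat \<Rightarrow> real"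
  assumes n: "n = Suc m" and i: "i \<in> {1..m}" and eq: "formal_equilibrium n A q"
    and sx: "(\<Sum>j=1..n. x j) = 1"
  shows "(\<Sum>j=1..m. Bmat n A i j * (q j - x j)) = mat_vec n A x i - mat_vec n A x n"
proof -
  define a where "a j = A i j - A n j" for j
  define w where "w j = q j - x j" for j
  have sq: "(\<Sum>j=1..n. q j) = 1" using eq by (simp add: formal_equilibrium_def)
  have qi: "mat_vec n A q i = mat_vec n A q n" using eq i n by (simp add: formal_equilibrium_def)
  have Sn: "(\<Sum>j=1..n. a j * w j) = (\<Sum>j=1..m. a j * w j) + a n * w n" using n by simp
  have E1: "(\<Sum>j=1..n. a j * w j) = (mat_vec n A q i - mat_vec n A q n) - (mat_vec n A x i - mat_vec n A x n)"
    unfolding mat_vec_def a_def w_def by (simp add: sum_subtractf[symmetric] algebra_simps)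
  have Sw: "(\<Sum>j=1..m. w j) = x n - q n"
    using sq sx n by (simp add: w_def sum_subtractf)
  have "(\<Sum>j=1..m. Bmat n A i j * (q j - x j)) = (\<Sum>j=1..m. a n * w j - a j * w j)"
  proof (rule sum.cong[OF refl])
    fix j assume "j \<in> {1..m}"
    have b: "Bmat n A i j = - (A i j - A i n - A n j + A n n)" using Bmat_eq[OF n i \<open>j \<in> {1..m}\<close>] .
    show "Bmat n A i j * (q j - x j) = a n * w j - a j * w j"
      unfolding b a_def w_def by (simp add: algebra_simps)
  qed
  also have "\<dots> = a n * (\<Sum>j=1..m. w j) - (\<Sum>j=1..m. a j * w j)"
    by (simp add: sum_subtractf sum_distrib_left)
  finally have L: "(\<Sum>j=1..m. Bmat n A i j * (q j - x j)) = a n * (x n - q n) - (\<Sum>j=1..m. a j * w j)"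
    unfolding Sw .
  have "a n * (x n - q n) = - (a n * w n)" by (simp add: w_def algebra_simps)
  then show ?thesis using L Sn E1 qi by linarith
qed


lemma part1:
  fixes n :: nat and A D :: "nat \<Rightarrow> nat \<Rightarrow> real" and q :: "nat \<Rightarrow> real"
  assumes antisym: "\<forall>i\<in>{1..n-1}. \<forall>j\<in>{1..n-1}.
        mat_mult (n-1) D (Bmat n A) i j = - mat_mult (n-1) D (Bmat n A) j i"
    and diag: "\<forall>i\<in>{1..n-1}. \<forall>j\<in>{1..n-1}. i \<noteq> j \<longrightarrow>
        mat_mult (n-1) (mat_transpose D) (\<lambda>k l. q k - (if k = l then 1 else 0)) i j = 0"
  shows "constant_of_motion (n-1) (Xtilde n A q) UNIV
           (\<lambda>u. (\<Sum>i=1..n-1. (\<Sum>k=1..n-1. D k i * q k) * u i)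
              + (\<Sum>i=1..n-1. ((\<Sum>k=1..n-1. D k i * q k) - D i i) * exp (u i)))"
  unfolding constant_of_motion_def
proof (intro allI impI)
  fix \<gamma> :: "real \<Rightarrow> nat \<Rightarrow> real" and T
  assume ic: "integral_curve (n-1) (Xtilde n A q) UNIV \<gamma> T"
  define m where "m = n - 1"
  define c where "c i = (\<Sum>k=1..m. D k i * q k)" for i
  have diag': "\<forall>i\<in>{1..m}. \<forall>j\<in>{1..m}. i \<noteq> j \<longrightarrow>
        mat_mult m (mat_transpose D) (\<lambda>k l. q k - (if k = l then 1 else 0)) i j = 0"
    using diag unfolding m_def .
  have antisym': "\<forall>i\<in>{1..m}. \<forall>j\<in>{1..m}.
        mat_mult m D (Bmat n A) i j = - mat_mult m D (Bmat n A) j i"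
    using antisym unfolding m_def .
  have conv: "convex T" using ic by (simp add: integral_curve_def is_interval_convex)
  have der: "((\<lambda>s. (\<Sum>i=1..m. c i * \<gamma> s i) + (\<Sum>i=1..m. (c i - D i i) * exp (\<gamma> s i)))
               has_real_derivative 0) (at t within T)" if t: "t \<in> T" for t
  proof -
    define u where "u = \<gamma> t"
    define X where "X = Xtilde n A q u"
    define S where "S = 1 + (\<Sum>j=1..m. exp (u j))"
    define \<eta> where "\<eta> = eta n q u"
    have Spos: "S > 0" unfolding S_def by (simp add: add_pos_nonneg sum_nonneg)
    have gi: "((\<lambda>s. \<gamma> s i) has_real_derivative X i) (at t within T)" if "i \<in> {1..m}" for i
      using ic t that by (simp add: integral_curve_def X_def u_def m_def)
    have d: "((\<lambda>s. (\<Sum>i=1..m. c i * \<gamma> s i) + (\<Sum>i=1..m. (c i - D i i) * exp (\<gamma> s i)))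
               has_real_derivative (\<Sum>i=1..m. c i * X i) + (\<Sum>i=1..m. (c i - D i i) * (exp (u i) * X i))) (at t within T)"
      unfolding u_def
      apply (rule DERIV_add)
       apply (rule DERIV_sum, rule DERIV_cmult, erule gi)
      apply (rule DERIV_sum, rule DERIV_cmult, rule DERIV_chain2[OF DERIV_exp], erule gi)
      done
    have trm: "c i * X i + (c i - D i i) * (exp (u i) * X i)
        = S * ((\<Sum>k=1..m. D k i * \<eta> k) * (\<Sum>j=1..m. Bmat n A i j * \<eta> j))" if i: "i \<in> {1..m}" for i
    proof -
      have g: "(\<Sum>k=1..m. D k i * (q k - exp (u k) / S)) = c i - D i i * (exp (u i) / S)
           - c i * (\<Sum>k\<in>{1..m}-{i}. exp (u k) / S)"
        using grad[OF diag' i, of "\<lambda>k. exp (u k) / S"] unfolding c_def .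
      have r: "(\<Sum>k\<in>{1..m}-{i}. exp (u k) / S) = (S - 1 - exp (u i)) / S"
        using i by (simp add: sum_divide_distrib[symmetric] sum_diff1 S_def)
      have e: "(\<Sum>k=1..m. D k i * \<eta> k) = (\<Sum>k=1..m. D k i * (q k - exp (u k) / S))"
        by (simp add: \<eta>_def eta_def S_def m_def)
      have x: "X i = (\<Sum>j=1..m. Bmat n A i j * \<eta> j)"
        by (simp add: X_def Xtilde_def mat_vec_def \<eta>_def m_def)
      have h: "c i - D i i * (exp (u i) / S) - c i * ((S - 1 - exp (u i)) / S)
          = (c i + (c i - D i i) * exp (u i)) / S"
        using Spos by (simp add: field_simps)
      have k: "S * ((c i + (c i - D i i) * exp (u i)) / S * X i) = (c i + (c i - D i i) * exp (u i)) * X i"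
        using Spos by simp
      show ?thesis unfolding e g r x[symmetric] h k by (simp only: algebra_simps)
    qed
    have "(\<Sum>i=1..m. c i * X i) + (\<Sum>i=1..m. (c i - D i i) * (exp (u i) * X i))
        = (\<Sum>i=1..m. c i * X i + (c i - D i i) * (exp (u i) * X i))"
      by (simp add: sum.distrib)
    also have "\<dots> = S * (\<Sum>i=1..m. (\<Sum>k=1..m. D k i * \<eta> k) * (\<Sum>j=1..m. Bmat n A i j * \<eta> j))"
      using trm by (simp add: sum_distrib_left)
    also have "\<dots> = 0" using core[OF antisym', of \<eta>] by simp
    finally show ?thesis using d by simp
  qed
  obtain k where "\<forall>x\<in>T. (\<Sum>i=1..m. c i * \<gamma> x i) + (\<Sum>i=1..m. (c i - D i i) * exp (\<gamma> x i)) = k"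
    using has_field_derivative_zero_constant[OF conv der] by blast
  then show "\<forall>s\<in>T. \<forall>t\<in>T. (\<lambda>u. (\<Sum>i=1..n-1. (\<Sum>k=1..n-1. D k i * q k) * u i)
              + (\<Sum>i=1..n-1. ((\<Sum>k=1..n-1. D k i * q k) - D i i) * exp (u i))) (\<gamma> s) =
          (\<lambda>u. (\<Sum>i=1..n-1. (\<Sum>k=1..n-1. D k i * q k) * u i)
              + (\<Sum>i=1..n-1. ((\<Sum>k=1..n-1. D k i * q k) - D i i) * exp (u i))) (\<gamma> t)"
    unfolding c_def m_def by simp
qed


lemma part2:
  fixes n :: nat and A D :: "nat \<Rightarrow> nat \<Rightarrow> real" and q :: "nat \<Rightarrow> real"
  assumes n2: "n \<ge> 2"
    and eq: "formal_equilibrium n A q"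
    and antisym: "\<forall>i\<in>{1..n-1}. \<forall>j\<in>{1..n-1}.
        mat_mult (n-1) D (Bmat n A) i j = - mat_mult (n-1) D (Bmat n A) j i"
    and diag: "\<forall>i\<in>{1..n-1}. \<forall>j\<in>{1..n-1}. i \<noteq> j \<longrightarrow>
        mat_mult (n-1) (mat_transpose D) (\<lambda>k l. q k - (if k = l then 1 else 0)) i j = 0"
  shows "constant_of_motion n (replicator n A) (simplex_interior n)
           (\<lambda>x. (\<Sum>i=1..n-1. (\<Sum>k=1..n-1. D k i * q k) * ln (x i / x n))
              + (\<Sum>i=1..n-1. ((\<Sum>k=1..n-1. D k i * q k) - D i i) * (x i / x n)))"
  unfolding constant_of_motion_def
proof (intro allI impI)
  fix \<gamma> :: "real \<Rightarrow> nat \<Rightarrow> real" and T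
  assume ic: "integral_curve n (replicator n A) (simplex_interior n) \<gamma> T"
  define m where "m = n - 1"
  have n: "n = Suc m" using n2 by (simp add: m_def)
  define c where "c i = (\<Sum>k=1..m. D k i * q k)" for i
  have diag': "\<forall>i\<in>{1..m}. \<forall>j\<in>{1..m}. i \<noteq> j \<longrightarrow>
        mat_mult m (mat_transpose D) (\<lambda>k l. q k - (if k = l then 1 else 0)) i j = 0"
    using diag unfolding m_def .
  have antisym': "\<forall>i\<in>{1..m}. \<forall>j\<in>{1..m}.
        mat_mult m D (Bmat n A) i j = - mat_mult m D (Bmat n A) j i"
    using antisym unfolding m_def .
  have conv: "convex T" using ic by (simp add: integral_curve_def is_interval_convex)
  have der: "((\<lambda>s. (\<Sum>i=1..m. c i * ln (\<gamma> s i / \<gamma> s n)) + (\<Sum>i=1..m. (c i - D i i) * (\<gamma> s i / \<gamma> s n)))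
               has_real_derivative 0) (at t within T)" if t: "t \<in> T" for t
  proof -
    define x where "x = \<gamma> t"
    define r where "r = mat_vec n A x"
    define av where "av = (\<Sum>j=1..n. x j * mat_vec n A x j)"
    define V where "V i = (replicator n A x i * x n - x i * replicator n A x n) / (x n * x n)" for i
    define w where "w k = q k - x k" for k
    have xin: "x \<in> simplex_interior n" using ic t by (simp add: integral_curve_def x_def)
    have xpos: "x i > 0" if "i \<in> {1..n}" for i using xin that by (simp add: simplex_interior_def)
    have xn: "x n > 0" using xpos n by simp
    have sx: "(\<Sum>j=1..n. x j) = 1" using xin by (simp add: simplex_interior_def)
    have gi: "((\<lambda>s. \<gamma> s i) has_real_derivative replicator n A x i) (at t within T)" if "i \<in> {1..n}" for i
      using ic t that by (simp add: integral_curve_def x_def)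
    have gn: "((\<lambda>s. \<gamma> s n) has_real_derivative replicator n A x n) (at t within T)"
      using gi n by simp
    have gdiv: "((\<lambda>s. \<gamma> s i / \<gamma> s n) has_real_derivative V i) (at t within T)" if "i \<in> {1..m}" for i
      unfolding V_def x_def
      by (rule DERIV_divide[OF gi[unfolded x_def] gn[unfolded x_def]]) (use that n xn x_def in auto)
    have gln: "((\<lambda>s. ln (\<gamma> s i / \<gamma> s n)) has_real_derivative (1 / (x i / x n)) * V i) (at t within T)"
      if i: "i \<in> {1..m}" for i
    proof -
      have "x i / x n > 0" using xpos[of i] xn i n by simp
      from DERIV_chain2[OF DERIV_ln_divide[OF this[unfolded x_def]] gdiv[OF i]] show ?thesis by (simp add: x_def)
    qed
    have d: "((\<lambda>s. (\<Sum>i=1..m. c i * ln (\<gamma> s i / \<gamma> s n)) + (\<Sum>i=1..m. (c i - D i i) * (\<gamma> s i / \<gamma> s n)))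
               has_real_derivative (\<Sum>i=1..m. c i * ((1 / (x i / x n)) * V i)) + (\<Sum>i=1..m. (c i - D i i) * V i)) (at t within T)"
      apply (rule DERIV_add)
       apply (rule DERIV_sum, rule DERIV_cmult, erule gln)
      apply (rule DERIV_sum, rule DERIV_cmult, erule gdiv)
      done
    have trm: "c i * ((1 / (x i / x n)) * V i) + (c i - D i i) * V i
        = (1 / x n) * ((\<Sum>k=1..m. D k i * w k) * (\<Sum>j=1..m. Bmat n A i j * w j))" if i: "i \<in> {1..m}" for i
    proof -
      have xi: "x i > 0" using xpos[of i] i n by simp
      have g: "(\<Sum>k=1..m. D k i * (q k - x k)) = c i - D i i * x i - c i * (\<Sum>k\<in>{1..m}-{i}. x k)"
        using grad[OF diag' i, of x] unfolding c_def .
      have sm: "(\<Sum>k=1..m. x k) = 1 - x n" using sx n by simp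
      have rr: "(\<Sum>k\<in>{1..m}-{i}. x k) = 1 - x n - x i"
        using i sm by (simp add: sum_diff1)
      have b: "(\<Sum>j=1..m. Bmat n A i j * w j) = r i - r n"
        using Bw[OF n i eq sx] by (simp add: w_def r_def)
      have v: "V i = (x i / x n) * (r i - r n)"
        unfolding V_def replicator_def r_def using xn by (simp add: field_simps)
      have e: "(\<Sum>k=1..m. D k i * w k) = c i - D i i * x i - c i * (1 - x n - x i)"
        unfolding w_def g rr ..
      have h: "c i * ((1 / (x i / x n)) * ((x i / x n) * (r i - r n))) = c i * (r i - r n)"
        using xi xn by simp
      have h2: "(c i - D i i) * ((x i / x n) * (r i - r n)) = (1 / x n) * (((c i - D i i) * x i) * (r i - r n))"
        by simp
      show ?thesis unfolding e b v h h2 using xn by (simp add: field_simps)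
    qed
    have "(\<Sum>i=1..m. c i * ((1 / (x i / x n)) * V i)) + (\<Sum>i=1..m. (c i - D i i) * V i)
        = (\<Sum>i=1..m. c i * ((1 / (x i / x n)) * V i) + (c i - D i i) * V i)"
      by (simp add: sum.distrib)
    also have "\<dots> = (1 / x n) * (\<Sum>i=1..m. (\<Sum>k=1..m. D k i * w k) * (\<Sum>j=1..m. Bmat n A i j * w j))"
      using trm by (simp add: sum_distrib_left)
    also have "\<dots> = 0" using core[OF antisym', of w] by simp
    finally show ?thesis using d by simp
  qed
  obtain k where "\<forall>x\<in>T. (\<Sum>i=1..m. c i * ln (\<gamma> x i / \<gamma> x n)) + (\<Sum>i=1..m. (c i - D i i) * (\<gamma> x i / \<gamma> x n)) = k"
    using has_field_derivative_zero_constant[OF conv der] by blast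
  then show "\<forall>s\<in>T. \<forall>t\<in>T. (\<lambda>x. (\<Sum>i=1..n-1. (\<Sum>k=1..n-1. D k i * q k) * ln (x i / x n))
              + (\<Sum>i=1..n-1. ((\<Sum>k=1..n-1. D k i * q k) - D i i) * (x i / x n))) (\<gamma> s) =
          (\<lambda>x. (\<Sum>i=1..n-1. (\<Sum>k=1..n-1. D k i * q k) * ln (x i / x n))
              + (\<Sum>i=1..n-1. ((\<Sum>k=1..n-1. D k i * q k) - D i i) * (x i / x n))) (\<gamma> t)"
    unfolding c_def m_def by simp
qed



theorem theorem3p1:
  fixes n :: nat and A D :: "nat \<Rightarrow> nat \<Rightarrow> real" and q :: "nat \<Rightarrow> real"
  assumes n2: "n \<ge> 2"
    and eq: "formal_equilibrium n A q"
    and antisym: "\<forall>i\<in>{1..n-1}. \<forall>j\<in>{1..n-1}.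
        mat_mult (n-1) D (Bmat n A) i j = - mat_mult (n-1) D (Bmat n A) j i"
    and diag: "\<forall>i\<in>{1..n-1}. \<forall>j\<in>{1..n-1}. i \<noteq> j \<longrightarrow>
        mat_mult (n-1) (mat_transpose D) (\<lambda>k l. q k - (if k = l then 1 else 0)) i j = 0"
  shows "constant_of_motion (n-1) (Xtilde n A q) UNIV
           (\<lambda>u. (\<Sum>i=1..n-1. (\<Sum>k=1..n-1. D k i * q k) * u i)
              + (\<Sum>i=1..n-1. ((\<Sum>k=1..n-1. D k i * q k) - D i i) * exp (u i)))
       \<and> constant_of_motion n (replicator n A) (simplex_interior n)
           (\<lambda>x. (\<Sum>i=1..n-1. (\<Sum>k=1..n-1. D k i * q k) * ln (x i / x n))
              + (\<Sum>i=1..n-1. ((\<Sum>k=1..n-1. D k i * q k) - D i i) * (x i / x n)))"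
  using part1[OF antisym diag] part2[OF n2 eq antisym diag] by blast

end
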